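(* Fix a level $\ell<K$ and a node $y\in\mathcal Z_\ell$, and write $y_l=\mathrm{left}(y)$, $y_r=\mathrm{right}(y)$. Let $\tilde{\boldsymbol\theta}^0\in\mathbb R^{\mathcal Z^*}$ and $\tilde{\boldsymbol\theta}=\tilde{\boldsymbol\theta}^0+\boldsymbol\delta$, with $\boldsymbol\mu^0=\tilde{\boldsymbol p}(\tilde{\boldsymbol\theta}^0)$ and $\boldsymbol\mu=\tilde{\boldsymbol p}(\tilde{\boldsymbol\theta})$, be such that: (i) $\boldsymbol\mu^0$ is coherent among all levels $k\ge\ell$; (ii) $\delta_z=0$ for every $z$ with $I_z\not\subseteq I_y$; (iii) $\boldsymbol\mu$ is coherent among all levels $k>\ell$. Let $$t=\frac{b_\ell}{B_{\ell-1}}\log\Bigl(\frac{1-\mu_y}{\mu_y}\cdot\frac{\mu_{y_l}+\mu_{y_r}}{1-\mu_{y_l}-\mu_{y_r}}\Bigr)$$ and $\tilde{\boldsymbol\theta}'=\tilde{\boldsymbol\theta}+t\,\mathbf a_y$, where $\mathbf a_y$ is the column of $\mathbf A$ indexed by $y$. Then $\boldsymbol\mu'=\tilde{\boldsymbol p}(\tilde{\boldsymbol\theta}')$ is coherent among all levels $k\ge\ell$.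
   Context: Fix an integer $K\ge1$. Let $T^*$ be the complete binary tree of depth $K$ whose nodes are intervals: the root (level $0$) has $I_{\mathit{root}}=[0,1)$, and each node $z$ at level $k<K$ with $I_z=[\alpha_z,\beta_z)$ has children $\mathrm{left}(z)$, $\mathrm{right}(z)$ at level $k+1$ with intervals $[\alpha_z,\frac{\alpha_z+\beta_z}2)$ and $[\frac{\alpha_z+\beta_z}2,\beta_z)$. Let $\mathcal Z^*$ be its node set, $\mathcal Z_k$ the nodes at level $k$, $\mathrm{level}(z)$ the level of $z$, and $\mathcal Y^*=\mathcal Z^*\setminus\mathcal Z_K$. Fix liquidity parameters $b_k>0$ ($k=0,\dots,K$) and set $B_\ell=\sum_{k=\ell+1}^K b_k$ for $\ell=-1,0,\dots,K$ (so $B_{\ell-1}=B_\ell+b_\ell$). For $\tilde{\boldsymbol\theta}\in\mathbb R^{\mathcal Z^*}$, $\tilde p_z(\tilde{\boldsymbol\theta})=e^{\tilde\theta_z/b_k}/\sum_{z'\in\mathcal Z_k}e^{\tilde\theta_{z'}/b_k}$ for $z\in\mathcal Z_k$. The constraint matrix $\mathbf A\in\mathbb R^{\mathcal Z^*\times\mathcal Y^*}$ has entries $A_{zy}=B_{\mathrm{level}(z)}$ if $z=y$, $-b_{\mathrm{level}(z)}$ if $I_z\subsetneq I_y$, and $0$ otherwise. A vector $\boldsymbol\mu\in\mathbb R^{\mathcal Z^*}$ is coherent among a set $L$ of levels if for all $k,m\in L$ with $k<m$ and all $z\in\mathcal Z_k$, $\mu_z=\sum_{u\in\mathcal Z_m:\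 I_u\subseteq I_z}\mu_u$. *)

theory Defs
  imports Complex_Main
begin

text \<open>Nodes of the complete binary tree of depth K are pairs (k, j) with k the level
  and j < 2^k the position; node (k,j) carries the dyadic interval [j/2^k, (j+1)/2^k).
  The root is (0,0); left(k,j) = (k+1,2j), right(k,j) = (k+1,2j+1).\<close>

type_synonym node = "nat \<times> nat"

definition level :: "node \<Rightarrow> nat" where
  "level z = fst z"

definition nodes_at :: "nat \<Rightarrow> node set" where
  "nodes_at k = {(k, j) | j. j < 2 ^ k}"

definition all_nodes :: "nat \<Rightarrow> node set" where
  "all_nodes K = (\<Union>k\<in>{..K}. nodes_at k)"

definition interv :: "node \<Rightarrow> real set" where
  "interv z = {real (snd z) / 2 ^ fst z ..< (real (snd z) + 1) / 2 ^ fst z}"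

definition left_child :: "node \<Rightarrow> node" where
  "left_child z = (fst z + 1, 2 * snd z)"

definition right_child :: "node \<Rightarrow> node" where
  "right_child z = (fst z + 1, 2 * snd z + 1)"

text \<open>B_l = sum_{k=l+1}^K b_k, for integer l \<ge> -1.\<close>
definition Bsum :: "nat \<Rightarrow> (nat \<Rightarrow> real) \<Rightarrow> int \<Rightarrow> real" where
  "Bsum K b l = (\<Sum>k\<in>{k. k \<le> K \<and> int k > l}. b k)"

definition ptilde :: "(nat \<Rightarrow> real) \<Rightarrow> (node \<Rightarrow> real) \<Rightarrow> node \<Rightarrow> real" where
  "ptilde b \<theta> z = exp (\<theta> z / b (level z)) /
      (\<Sum>z'\<in>nodes_at (level z). exp (\<theta> z' / b (level z)))"

definition Acol :: "nat \<Rightarrow> (nat \<Rightarrow> real) \<Rightarrow> node \<Rightarrow> node \<Rightarrow> real" where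
  "Acol K b y z =
     (if z = y then Bsum K b (int (level z))
      else if interv z \<subset> interv y then - b (level z) else 0)"

definition coherent :: "(node \<Rightarrow> real) \<Rightarrow> nat set \<Rightarrow> bool" where
  "coherent \<mu> L = (\<forall>k\<in>L. \<forall>m\<in>L. k < m \<longrightarrow>
      (\<forall>z\<in>nodes_at k. \<mu> z = (\<Sum>u\<in>{u\<in>nodes_at m. interv u \<subseteq> interv z}. \<mu> u)))"

end

theory Submission
  imports Defs
begin


definition anc :: "nat \<Rightarrow> node \<Rightarrow> node" where
  "anc k u = (k, snd u div 2 ^ (fst u - k))"

lemma nodes_at_iff: "z \<in> nodes_at k \<longleftrightarrow> fst z = k \<and> snd z < 2 ^ k"
  unfolding nodes_at_def by (cases z) auto

lemma finite_nodes_at: "finite (nodes_at k)"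
proof -
  have "nodes_at k = (\<lambda>j. (k, j)) ` {..<2^k}" unfolding nodes_at_def by auto
  then show ?thesis by simp
qed

lemma nodes_at_ne: "(k, 0) \<in> nodes_at k"
  by (simp add: nodes_at_iff)

lemma nat_sub_aux:
  fixes i j d :: nat
  shows "j * 2^d \<le> i \<and> i + 1 \<le> (j+1) * 2^d \<longleftrightarrow> i div 2^d = j"
proof -
  have q: "(2::nat)^d > 0" by simp
  have "i div 2^d = j \<longleftrightarrow> j \<le> i div 2^d \<and> i div 2^d < j+1" by auto
  also have "\<dots> \<longleftrightarrow> j*2^d \<le> i \<and> i < (j+1)*2^d"
    using less_eq_div_iff_mult_less_eq[OF q] div_less_iff_less_mult[OF q] by simp
  finally show ?thesis by auto
qed

lemma interv_sub:
  "interv (m, i) \<subseteq> interv (k, j) \<longleftrightarrow> k \<le> m \<and> i div 2^(m-k) = j"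
proof
  assume h: "interv (m, i) \<subseteq> interv (k, j)"
  have "real i / 2^m < (real i + 1) / 2^m" by (simp add: divide_strict_right_mono)
  with h atLeastLessThan_subset_iff[of "real i / 2^m" "(real i + 1) / 2^m" "real j / 2^k" "(real j + 1) / 2^k"]
  have h1: "real j / 2^k \<le> real i / 2^m" and h2: "(real i + 1) / 2^m \<le> (real j + 1) / 2^k"
    unfolding interv_def by auto
  have a1: "real j * 2^m \<le> real i * 2^k" using h1 by (simp add: field_simps)
  have a2: "(real i + 1) * 2^k \<le> (real j + 1) * 2^m" using h2 by (simp add: field_simps)
  have "real (j * 2^m) \<le> real (i * 2^k)" using a1 by simp
  then have n1: "j * 2^m \<le> i * 2^k" by (simp only: of_nat_le_iff)
  have "real ((i + 1) * 2^k) \<le> real ((j + 1) * 2^m)" using a2 by (simp only: of_nat_mult of_nat_add of_nat_1 of_nat_power of_nat_numeral)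
  then have n2: "(i + 1) * 2^k \<le> (j + 1) * 2^m" by (simp only: of_nat_le_iff)
  have km: "k \<le> m"
  proof (rule ccontr)
    assume "\<not> k \<le> m"
    define e where "e = k - m"
    have e: "k = m + e" "e \<ge> 1" using \<open>\<not> k \<le> m\<close> unfolding e_def by auto
    have p: "(2::nat)^k = 2^m * 2^e" using e by (simp add: power_add)
    have "j * 2^m \<le> (i * 2^e) * 2^m" using n1 p by (simp add: ac_simps)
    then have "j \<le> i * 2^e" by simp
    moreover have "((i+1) * 2^e) * 2^m \<le> (j + 1) * 2^m" by (metis n2 p mult.assoc mult.commute)
    then have "(i+1) * 2^e \<le> j + 1" by (subst (asm) mult_le_cancel2) simp
    moreover have "(2::nat)^1 \<le> 2^e" using e by (intro power_increasing) simp_all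
    ultimately show False by (simp add: algebra_simps)
  qed
  define d where "d = m - k"
  have d: "m = k + d" using km unfolding d_def by auto
  have p: "(2::nat)^m = 2^d * 2^k" using d by (simp add: power_add)
  have "(j * 2^d) * 2^k \<le> i * 2^k" using n1 p by (simp add: ac_simps)
  then have "j * 2^d \<le> i" by simp
  moreover have "(i + 1) * 2^k \<le> ((j+1) * 2^d) * 2^k" by (metis n2 p mult.assoc mult.commute)
  then have "i + 1 \<le> (j+1) * 2^d" by (subst (asm) mult_le_cancel2) simp
  ultimately have "i div 2^d = j" using nat_sub_aux[of j d i] by blast
  then show "k \<le> m \<and> i div 2^(m-k) = j" using km d by simp
next
  assume h: "k \<le> m \<and> i div 2^(m-k) = j"
  define d where "d = m - k"
  have d: "m = k + d" using h unfolding d_def by auto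
  have p: "(2::real)^m = 2^d * 2^k" using d by (simp add: power_add)
  from h d have "i div 2^d = j" by simp
  then have n: "j * 2^d \<le> i" "i + 1 \<le> (j+1) * 2^d" using nat_sub_aux[of j d i] by blast+
  have "real (j * 2^d) \<le> real i" using n(1) by (simp only: of_nat_le_iff)
  then have r1: "real j * 2^d \<le> real i" by simp
  have "real (i + 1) \<le> real ((j+1) * 2^d)" using n(2) by (simp only: of_nat_le_iff)
  then have r2: "real i + 1 \<le> (real j + 1) * 2^d" by (simp add: algebra_simps)
  have "real j / 2^k \<le> real i / 2^m" using r1 p by (simp add: field_simps)
  moreover have "(real i + 1) / 2^m \<le> (real j + 1) / 2^k"
  proof -
    have q: "(real i + 1) / 2^d \<le> real j + 1" by (subst pos_divide_le_eq) (simp_all add: r2)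
    have "((real i + 1) / 2^d) / 2^k \<le> (real j + 1) / 2^k" by (rule divide_right_mono[OF q]) simp
    then show ?thesis by (simp only: p divide_divide_eq_left)
  qed
  ultimately show "interv (m, i) \<subseteq> interv (k, j)" unfolding interv_def by auto
qed



definition sm :: "node set \<Rightarrow> (node \<Rightarrow> real) \<Rightarrow> node \<Rightarrow> real" where
  "sm N f z = exp (f z) / (\<Sum>z'\<in>N. exp (f z'))"

lemma sumexp_pos: fixes f :: "node \<Rightarrow> real" shows "finite N \<Longrightarrow> N \<noteq> {} \<Longrightarrow> (\<Sum>z'\<in>N. exp (f z')) > 0"
  by (intro sum_pos) auto

lemma sm_pos: "finite N \<Longrightarrow> N \<noteq> {} \<Longrightarrow> sm N f z > 0"
  unfolding sm_def using sumexp_pos[of N f] by simp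

lemma sm_sum: "finite N \<Longrightarrow> N \<noteq> {} \<Longrightarrow> sum (sm N f) N = 1"
  unfolding sm_def using sumexp_pos[of N f] by (simp add: sum_divide_distrib[symmetric])

lemma sm_sumD: "finite N \<Longrightarrow> N \<noteq> {} \<Longrightarrow> D \<subseteq> N \<Longrightarrow>
   sum (sm N f) D = (\<Sum>z\<in>D. exp (f z)) / (\<Sum>z'\<in>N. exp (f z'))"
  unfolding sm_def by (simp add: sum_divide_distrib[symmetric])

lemma sm_shift:
  assumes fin: "finite N" and ne: "N \<noteq> {}" and DN: "D \<subseteq> N"
    and g: "\<And>z. z \<in> N \<Longrightarrow> g z = f z + (if z \<in> D then c else 0)"
    and z: "z \<in> N"
  shows "sm N g z * (1 - sum (sm N f) D + sum (sm N f) D * exp c)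
        = sm N f z * (if z \<in> D then exp c else 1)"
proof -
  define Z where "Z = (\<Sum>z'\<in>N. exp (f z'))"
  define Z' where "Z' = (\<Sum>z'\<in>N. exp (g z'))"
  define SD where "SD = (\<Sum>z'\<in>D. exp (f z'))"
  have Zp: "Z > 0" unfolding Z_def using sumexp_pos[OF fin ne] .
  have Z'p: "Z' > 0" unfolding Z'_def using sumexp_pos[OF fin ne] .
  have finD: "finite D" using fin DN finite_subset by blast
  have eg: "\<And>u. u \<in> N \<Longrightarrow> exp (g u) = exp (f u) * (if u \<in> D then exp c else 1)"
    using g by (simp add: exp_add)
  have "Z' = (\<Sum>u\<in>N. exp (f u) * (if u \<in> D then exp c else 1))"
    unfolding Z'_def by (rule sum.cong) (simp_all add: eg)
  also have "\<dots> = (\<Sum>u\<in>N - D. exp (f u) * (if u \<in> D then exp c else 1)) + (\<Sum>u\<in>D. exp (f u) * (if u \<in> D then exp c else 1))"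
    by (rule sum.subset_diff[OF DN fin])
  also have "\<dots> = (\<Sum>u\<in>N - D. exp (f u)) + exp c * SD"
    unfolding SD_def sum_distrib_left by (simp add: mult.commute)
  finally have Z'e: "Z' = (\<Sum>u\<in>N - D. exp (f u)) + exp c * SD" .
  have Ze: "Z = (\<Sum>u\<in>N - D. exp (f u)) + SD"
    unfolding Z_def SD_def using sum.subset_diff[OF DN fin] by simp
  have S: "sum (sm N f) D = SD / Z" unfolding SD_def Z_def using sm_sumD[OF fin ne DN] .
  have Z'2: "Z' = Z - SD + SD * exp c" using Z'e Ze by simp
  have "1 - SD / Z + SD / Z * exp c = Z' / Z"
    unfolding Z'2 using Zp by (simp add: field_simps)
  then have "sm N g z * (1 - sum (sm N f) D + sum (sm N f) D * exp c) = exp (g z) / Z"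
    unfolding S sm_def Z'_def[symmetric] using Z'p Zp by simp
  also have "\<dots> = sm N f z * (if z \<in> D then exp c else 1)"
    unfolding sm_def Z_def[symmetric] using eg[OF z] by simp
  finally show ?thesis .
qed

lemma sm_off:
  assumes fin: "finite N" and ne: "N \<noteq> {}" and DN: "D \<subseteq> N"
    and g: "\<And>z. z \<in> N - D \<Longrightarrow> g z = f z"
    and z: "z \<in> N - D"
  shows "sm N g z * (1 - sum (sm N f) D) = sm N f z * (1 - sum (sm N g) D)"
proof -
  define Zf where "Zf = (\<Sum>z'\<in>N. exp (f z'))"
  define Zg where "Zg = (\<Sum>z'\<in>N. exp (g z'))"
  define X where "X = (\<Sum>u\<in>N - D. exp (f u))"
  have Zfp: "Zf > 0" unfolding Zf_def using sumexp_pos[OF fin ne] .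
  have Zgp: "Zg > 0" unfolding Zg_def using sumexp_pos[OF fin ne] .
  have Xg: "X = (\<Sum>u\<in>N - D. exp (g u))" unfolding X_def by (rule sum.cong) (simp_all add: g)
  have Zfe: "Zf = X + (\<Sum>u\<in>D. exp (f u))"
    unfolding Zf_def X_def using sum.subset_diff[OF DN fin] by simp
  have Zge: "Zg = X + (\<Sum>u\<in>D. exp (g u))"
    unfolding Zg_def Xg using sum.subset_diff[OF DN fin] by simp
  have 1: "1 - sum (sm N f) D = X / Zf"
    using sm_sumD[OF fin ne DN, of f] Zfe Zfp unfolding Zf_def[symmetric] by (simp add: field_simps)
  have 2: "1 - sum (sm N g) D = X / Zg"
    using sm_sumD[OF fin ne DN, of g] Zge Zgp unfolding Zg_def[symmetric] by (simp add: field_simps)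
  have gz: "g z = f z" using g z .
  show ?thesis unfolding 1 2 sm_def Zf_def[symmetric] Zg_def[symmetric] gz by simp
qed

lemma pt_sm: "z \<in> nodes_at k \<Longrightarrow> ptilde b \<theta> z = sm (nodes_at k) (\<lambda>u. \<theta> u / b k) z"
  unfolding ptilde_def sm_def level_def by (simp add: nodes_at_iff)

lemma pt_sum_sm: "A \<subseteq> nodes_at k \<Longrightarrow> sum (ptilde b \<theta>) A = sum (sm (nodes_at k) (\<lambda>u. \<theta> u / b k)) A"
  by (rule sum.cong) (auto simp: pt_sm)

lemma nodes_ne: "nodes_at k \<noteq> {}" using nodes_at_ne by blast

lemma pt_pos: "z \<in> nodes_at k \<Longrightarrow> ptilde b \<theta> z > 0"
  using pt_sm sm_pos[OF finite_nodes_at nodes_ne] by metis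

lemma pt_sum: "sum (ptilde b \<theta>) (nodes_at k) = 1"
  using pt_sum_sm[of "nodes_at k" k b \<theta>] sm_sum[OF finite_nodes_at nodes_ne] by simp

lemma pt_sum_le1: "A \<subseteq> nodes_at k \<Longrightarrow> sum (ptilde b \<theta>) A \<le> 1"
proof -
  assume A: "A \<subseteq> nodes_at k"
  have "sum (ptilde b \<theta>) A \<le> sum (ptilde b \<theta>) (nodes_at k)"
    by (rule sum_mono2[OF finite_nodes_at A]) (auto intro: less_imp_le pt_pos)
  then show ?thesis using pt_sum by simp
qed

lemma pt_sum_nonneg: "A \<subseteq> nodes_at k \<Longrightarrow> sum (ptilde b \<theta>) A \<ge> 0"
  by (rule sum_nonneg) (meson less_imp_le pt_pos subsetD)

lemma pt_shift:
  assumes DN: "D \<subseteq> nodes_at k"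
    and g: "\<And>z. z \<in> nodes_at k \<Longrightarrow> \<theta>' z / b k = \<theta> z / b k + (if z \<in> D then c else 0)"
    and z: "z \<in> nodes_at k"
  shows "ptilde b \<theta>' z * (1 - sum (ptilde b \<theta>) D + sum (ptilde b \<theta>) D * exp c)
        = ptilde b \<theta> z * (if z \<in> D then exp c else 1)"
  using sm_shift[OF finite_nodes_at nodes_ne DN, of "\<lambda>u. \<theta>' u / b k" "\<lambda>u. \<theta> u / b k" c z] g z
    pt_sm[OF z] pt_sum_sm[OF DN] by simp

lemma pt_off:
  assumes DN: "D \<subseteq> nodes_at k"
    and g: "\<And>z. z \<in> nodes_at k - D \<Longrightarrow> \<theta>' z = \<theta> z"
    and z: "z \<in> nodes_at k - D"
  shows "ptilde b \<theta>' z * (1 - sum (ptilde b \<theta>) D) = ptilde b \<theta> z * (1 - sum (ptilde b \<theta>') D)"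
  using sm_off[OF finite_nodes_at nodes_ne DN, of "\<lambda>u. \<theta>' u / b k" "\<lambda>u. \<theta> u / b k" z] g z
    pt_sm[of z k] pt_sum_sm[OF DN] by simp



lemma anc_nodes: "u \<in> nodes_at m \<Longrightarrow> k \<le> m \<Longrightarrow> anc k u \<in> nodes_at k"
proof -
  assume u: "u \<in> nodes_at m" and km: "k \<le> m"
  have "(2::nat)^m = 2^k * 2^(m-k)" using km by (simp add: power_add[symmetric])
  then have "snd u < 2^k * 2^(m-k)" using u by (simp add: nodes_at_iff)
  then have "snd u div 2^(m-k) < 2^k" by (simp add: div_less_iff_less_mult)
  then show ?thesis using u unfolding anc_def by (simp add: nodes_at_iff)
qed

lemma anc_anc: "u \<in> nodes_at m \<Longrightarrow> k \<le> j \<Longrightarrow> j \<le> m \<Longrightarrow> anc k (anc j u) = anc k u"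
proof -
  assume u: "u \<in> nodes_at m" and kj: "k \<le> j" and jm: "j \<le> m"
  have "(2::nat)^(m-k) = 2^(m-j) * 2^(j-k)" using kj jm by (simp add: power_add[symmetric])
  then show ?thesis using u unfolding anc_def by (simp add: nodes_at_iff div_mult2_eq)
qed

lemma anc_self: "u \<in> nodes_at k \<Longrightarrow> anc k u = u"
  unfolding anc_def by (cases u) (simp add: nodes_at_iff)

lemma desc_eq: "z \<in> nodes_at k \<Longrightarrow> u \<in> nodes_at m \<Longrightarrow> k \<le> m \<Longrightarrow> (interv u \<subseteq> interv z \<longleftrightarrow> anc k u = z)"
  unfolding anc_def by (cases u, cases z) (auto simp: nodes_at_iff interv_sub)

lemma sub_level: "z \<in> nodes_at k \<Longrightarrow> y \<in> nodes_at l \<Longrightarrow> interv z \<subseteq> interv y \<Longrightarrow> l \<le> k"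
  by (cases z, cases y) (auto simp: nodes_at_iff interv_sub)

lemma children_nodes: "y \<in> nodes_at l \<Longrightarrow> left_child y \<in> nodes_at (Suc l) \<and> right_child y \<in> nodes_at (Suc l)"
  unfolding left_child_def right_child_def by (cases y) (auto simp: nodes_at_iff)

lemma children_iff: "v \<in> nodes_at (Suc l) \<Longrightarrow> y \<in> nodes_at l \<Longrightarrow>
   (anc l v = y \<longleftrightarrow> v = left_child y \<or> v = right_child y)"
  unfolding anc_def left_child_def right_child_def
  by (cases v, cases y) (auto simp: nodes_at_iff)

lemma children_ne: "left_child y \<noteq> right_child y"
  unfolding left_child_def right_child_def by simp

lemma in_all_nodes: "z \<in> nodes_at k \<Longrightarrow> k \<le> K \<Longrightarrow> z \<in> all_nodes K"
  unfolding all_nodes_def by auto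

lemma Bsum_split: "l \<le> K \<Longrightarrow> Bsum K b (int l - 1) = Bsum K b (int l) + b l"
proof -
  assume lK: "l \<le> K"
  have e: "{k. k \<le> K \<and> int k > int l - 1} = insert l {k. k \<le> K \<and> int k > int l}" using lK by auto
  show ?thesis unfolding Bsum_def e by (subst sum.insert) auto
qed

lemma Bsum_nonneg: "(\<And>k. k \<le> K \<Longrightarrow> b k > 0) \<Longrightarrow> Bsum K b x \<ge> 0"
  unfolding Bsum_def by (rule sum_nonneg) (simp add: less_imp_le)

lemma desc_set: "z \<in> nodes_at k \<Longrightarrow> k \<le> m \<Longrightarrow>
   {u \<in> nodes_at m. interv u \<subseteq> interv z} = {u \<in> nodes_at m. anc k u = z}"
  using desc_eq[of z k _ m] by blast

lemma cohD: "coherent \<mu> L \<Longrightarrow> k \<in> L \<Longrightarrow> m \<in> L \<Longrightarrow> k < m \<Longrightarrow> z \<in> nodes_at k \<Longrightarrow>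
   \<mu> z = sum \<mu> {u \<in> nodes_at m. anc k u = z}"
  unfolding coherent_def using desc_set[of z k m] by auto



theorem lemma3:
  fixes K :: nat and b :: "nat \<Rightarrow> real" and l :: nat and y :: node
    and \<theta>0 \<delta> :: "node \<Rightarrow> real"
  assumes K: "K \<ge> 1"
    and b_pos: "\<And>k. k \<le> K \<Longrightarrow> b k > 0"
    and l: "l < K"
    and y: "y \<in> nodes_at l"
    and coh0: "coherent (ptilde b \<theta>0) {k. l \<le> k \<and> k \<le> K}"
    and delta: "\<And>z. z \<in> all_nodes K \<Longrightarrow> \<not> interv z \<subseteq> interv y \<Longrightarrow> \<delta> z = 0"
    and coh: "coherent (ptilde b (\<lambda>z. \<theta>0 z + \<delta> z)) {k. l < k \<and> k \<le> K}"
  shows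
    "let \<theta> = (\<lambda>z. \<theta>0 z + \<delta> z);
         \<mu> = ptilde b \<theta>;
         t = b l / Bsum K b (int l - 1) *
             ln ((1 - \<mu> y) / \<mu> y *
                 ((\<mu> (left_child y) + \<mu> (right_child y)) /
                  (1 - \<mu> (left_child y) - \<mu> (right_child y))));
         \<theta>' = (\<lambda>z. \<theta> z + t * Acol K b y z)
     in coherent (ptilde b \<theta>') {k. l \<le> k \<and> k \<le> K}"
proof -
  define \<theta> where "\<theta> = (\<lambda>z. \<theta>0 z + \<delta> z)"
  define \<mu>0 where "\<mu>0 = ptilde b \<theta>0"
  define \<mu> where "\<mu> = ptilde b \<theta>"
  define S where "S = \<mu> (left_child y) + \<mu> (right_child y)"
  define Bl where "Bl = Bsum K b (int l)"
  define B' where "B' = Bsum K b (int l - 1)"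
  define t where "t = b l / B' * ln ((1 - \<mu> y) / \<mu> y * (S / (1 - S)))"
  define \<theta>' where "\<theta>' = (\<lambda>z. \<theta> z + t * Acol K b y z)"
  define \<mu>' where "\<mu>' = ptilde b \<theta>'"
  define Dm where "Dm = (\<lambda>m. {u \<in> nodes_at m. anc l u = y})"
  define E where "E = exp (t * Bl / b l)"
  define Dn where "Dn = 1 - S + S * exp (- t)"
  define Dl where "Dl = 1 - \<mu> y + \<mu> y * E"
  have t_eq: "b l / Bsum K b (int l - 1) *
             ln ((1 - \<mu> y) / \<mu> y *
                 ((\<mu> (left_child y) + \<mu> (right_child y)) /
                  (1 - \<mu> (left_child y) - \<mu> (right_child y)))) = t"
    unfolding t_def S_def B'_def by (simp add: diff_diff_eq)
  have bl: "b l > 0" using b_pos l by simp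
  have B'e: "B' = Bl + b l" unfolding B'_def Bl_def using Bsum_split l by simp
  have Bl0: "Bl \<ge> 0" unfolding Bl_def using Bsum_nonneg b_pos by blast
  have B'p: "B' > 0" using B'e Bl0 bl by simp
  have lev: "\<And>z k. z \<in> nodes_at k \<Longrightarrow> level z = k" by (simp add: level_def nodes_at_iff)
  have yl: "left_child y \<in> nodes_at (Suc l)" and yr: "right_child y \<in> nodes_at (Suc l)"
    using children_nodes[OF y] by auto
  have Dm_sub: "\<And>m. Dm m \<subseteq> nodes_at m" unfolding Dm_def by auto
  have desc_Dm: "\<And>m. l \<le> m \<Longrightarrow> {u \<in> nodes_at m. interv u \<subseteq> interv y} = Dm m"
    unfolding Dm_def using desc_eq[OF y] by auto
  have Acol_l: "\<And>z. z \<in> nodes_at l \<Longrightarrow> Acol K b y z = (if z = y then Bl else 0)"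
  proof -
    fix z assume z: "z \<in> nodes_at l"
    have "z \<noteq> y \<Longrightarrow> \<not> interv z \<subseteq> interv y" using desc_eq[OF y z] anc_self[OF z] by simp
    then show "Acol K b y z = (if z = y then Bl else 0)"
      unfolding Acol_def Bl_def using lev[OF y] by auto
  qed
  have Acol_k: "\<And>z k. l < k \<Longrightarrow> z \<in> nodes_at k \<Longrightarrow> Acol K b y z = (if anc l z = y then - b k else 0)"
  proof -
    fix z k assume lk: "l < k" and z: "z \<in> nodes_at k"
    have zy: "z \<noteq> y" using lk lev[OF z] lev[OF y] by auto
    have "\<not> interv y \<subseteq> interv z" using sub_level[OF y z] lk by auto
    then have "interv z \<subset> interv y \<longleftrightarrow> anc l z = y" using desc_eq[OF y z] lk by auto
    then show "Acol K b y z = (if anc l z = y then - b k else 0)"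
      unfolding Acol_def using zy lev[OF z] by auto
  qed
  have th_l: "\<And>z. z \<in> nodes_at l - {y} \<Longrightarrow> \<theta> z = \<theta>0 z"
  proof -
    fix z assume z: "z \<in> nodes_at l - {y}"
    have "\<not> interv z \<subseteq> interv y" using desc_eq[OF y, of z l] anc_self[of z l] z by auto
    moreover have "z \<in> all_nodes K" using in_all_nodes[of z l K] z l by auto
    ultimately show "\<theta> z = \<theta>0 z" unfolding \<theta>_def using delta by simp
  qed
  have th_m: "\<And>z m. l \<le> m \<Longrightarrow> m \<le> K \<Longrightarrow> z \<in> nodes_at m - Dm m \<Longrightarrow> \<theta> z = \<theta>0 z"
  proof -
    fix z m assume lm: "l \<le> m" and mK: "m \<le> K" and z: "z \<in> nodes_at m - Dm m"
    have "\<not> interv z \<subseteq> interv y" using desc_eq[OF y, of z m] z lm unfolding Dm_def by auto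
    moreover have "z \<in> all_nodes K" using in_all_nodes[of z m K] z mK by auto
    ultimately show "\<theta> z = \<theta>0 z" unfolding \<theta>_def using delta by simp
  qed
  have cohm: "\<And>k m z. l < k \<Longrightarrow> k < m \<Longrightarrow> m \<le> K \<Longrightarrow> z \<in> nodes_at k \<Longrightarrow> \<mu> z = sum \<mu> {u \<in> nodes_at m. anc k u = z}"
    unfolding \<mu>_def \<theta>_def by (rule cohD[OF coh]) auto
  have coh0m: "\<And>k m z. l \<le> k \<Longrightarrow> k < m \<Longrightarrow> m \<le> K \<Longrightarrow> z \<in> nodes_at k \<Longrightarrow> \<mu>0 z = sum \<mu>0 {u \<in> nodes_at m. anc k u = z}"
    unfolding \<mu>0_def by (rule cohD[OF coh0]) auto
  have al: "anc l (left_child y) = y" using children_iff[OF yl y] by simp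
  have ar: "anc l (right_child y) = y" using children_iff[OF yr y] by simp
  have S_nodes: "Dm (Suc l) = {left_child y, right_child y}"
    unfolding Dm_def using children_iff[OF _ y] yl yr al ar by blast
  have S_eq: "sum \<mu> (Dm (Suc l)) = S" unfolding S_nodes S_def using children_ne[of y] by simp
  have S_k: "\<And>k. l < k \<Longrightarrow> k \<le> K \<Longrightarrow> sum \<mu> (Dm k) = S"
  proof -
    fix k assume lk: "l < k" and kK: "k \<le> K"
    show "sum \<mu> (Dm k) = S"
    proof (cases "k = Suc l")
      case True then show ?thesis using S_eq by simp
    next
      case False
      then have lk2: "Suc l < k" using lk by simp
      have img: "anc (Suc l) ` Dm k \<subseteq> Dm (Suc l)"
      proof
        fix v assume "v \<in> anc (Suc l) ` Dm k"
        then obtain u where u: "u \<in> Dm k" and v: "v = anc (Suc l) u" by blast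
        have "v \<in> nodes_at (Suc l)" using anc_nodes[of u k "Suc l"] u lk2 v unfolding Dm_def by auto
        moreover have "anc l v = y" using anc_anc[of u k l "Suc l"] u lk2 v unfolding Dm_def by auto
        ultimately show "v \<in> Dm (Suc l)" unfolding Dm_def by simp
      qed
      have "sum \<mu> (Dm k) = (\<Sum>v\<in>Dm (Suc l). sum \<mu> {u \<in> Dm k. anc (Suc l) u = v})"
        by (rule sum.group[symmetric, OF _ _ img]) (auto intro: finite_subset[OF Dm_sub finite_nodes_at])
      also have "\<dots> = (\<Sum>v\<in>Dm (Suc l). \<mu> v)"
      proof (rule sum.cong[OF refl])
        fix v assume v: "v \<in> Dm (Suc l)"
        have "{u \<in> Dm k. anc (Suc l) u = v} = {u \<in> nodes_at k. anc (Suc l) u = v}"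
          using v anc_anc[of _ k l "Suc l"] lk2 unfolding Dm_def by auto
        then show "sum \<mu> {u \<in> Dm k. anc (Suc l) u = v} = \<mu> v"
          using cohm[of "Suc l" k v] lk2 kK v unfolding Dm_def by auto
      qed
      finally show ?thesis using S_eq by simp
    qed
  qed
  have Sgt: "0 < S" unfolding S_def \<mu>_def using pt_pos[OF yl] pt_pos[OF yr] by (simp add: add_pos_pos)
  have Sle: "S \<le> 1" using S_eq pt_sum_le1[OF Dm_sub[of "Suc l"], of b \<theta>] unfolding \<mu>_def by simp
  have muy: "0 < \<mu> y" unfolding \<mu>_def using pt_pos[OF y] .
  have muy1: "\<mu> y \<le> 1" using pt_sum_le1[of "{y}" l b \<theta>] y unfolding \<mu>_def by simp
  have Ep: "E > 0" unfolding E_def by simp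
  have Dnp: "Dn > 0"
  proof -
    have "S * exp (-t) > 0" using Sgt by simp
    then show ?thesis unfolding Dn_def using Sle by simp
  qed
  have Dlp: "Dl > 0"
  proof -
    have "\<mu> y * E > 0" using muy Ep by simp
    then show ?thesis unfolding Dl_def using muy1 by simp
  qed
  have M1: "\<And>k z. l < k \<Longrightarrow> k \<le> K \<Longrightarrow> z \<in> nodes_at k \<Longrightarrow>
      \<mu>' z * Dn = \<mu> z * (if anc l z = y then exp (- t) else 1)"
  proof -
    fix k z assume lk: "l < k" and kK: "k \<le> K" and z: "z \<in> nodes_at k"
    have bk: "b k > 0" using b_pos kK by simp
    have g: "\<And>u. u \<in> nodes_at k \<Longrightarrow> \<theta>' u / b k = \<theta> u / b k + (if u \<in> Dm k then - t else 0)"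
    proof -
      fix u assume u: "u \<in> nodes_at k"
      show "\<theta>' u / b k = \<theta> u / b k + (if u \<in> Dm k then - t else 0)"
        unfolding \<theta>'_def Acol_k[OF lk u] Dm_def using u bk by (simp add: field_simps)
    qed
    have "\<mu>' z * (1 - sum \<mu> (Dm k) + sum \<mu> (Dm k) * exp (- t)) = \<mu> z * (if z \<in> Dm k then exp (- t) else 1)"
      unfolding \<mu>'_def \<mu>_def by (rule pt_shift[where D="Dm k" and k=k and b=b and \<theta>'=\<theta>' and \<theta>=\<theta> and c="- t", OF Dm_sub g z])
    then show "\<mu>' z * Dn = \<mu> z * (if anc l z = y then exp (- t) else 1)"
      using S_k[OF lk kK] z unfolding Dn_def Dm_def by simp
  qed
  have M0: "\<And>z. z \<in> nodes_at l \<Longrightarrow> \<mu>' z * Dl = \<mu> z * (if z = y then E else 1)"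
  proof -
    fix z assume z: "z \<in> nodes_at l"
    have g: "\<And>u. u \<in> nodes_at l \<Longrightarrow> \<theta>' u / b l = \<theta> u / b l + (if u \<in> {y} then t * Bl / b l else 0)"
    proof -
      fix u assume u: "u \<in> nodes_at l"
      show "\<theta>' u / b l = \<theta> u / b l + (if u \<in> {y} then t * Bl / b l else 0)"
        unfolding \<theta>'_def Acol_l[OF u] using bl by (simp add: add_divide_distrib)
    qed
    have "\<mu>' z * (1 - sum \<mu> {y} + sum \<mu> {y} * exp (t * Bl / b l)) = \<mu> z * (if z \<in> {y} then exp (t * Bl / b l) else 1)"
      unfolding \<mu>'_def \<mu>_def by (rule pt_shift[where D="{y}" and k=l and b=b and \<theta>'=\<theta>' and \<theta>=\<theta> and c="t * Bl / b l", OF _ g z]) (use y in auto)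
    then show "\<mu>' z * Dl = \<mu> z * (if z = y then E else 1)"
      unfolding Dl_def E_def by simp
  qed
  have KI: "\<mu> y * E * (1 - S) = S * exp (- t) * (1 - \<mu> y)"
  proof (cases "l = 0")
    case True
    have y0: "y = (0, 0)" using y True by (cases y) (simp add: nodes_at_iff)
    have n0: "nodes_at 0 = {y}" using y0 by (auto simp: nodes_at_iff)
    have "\<mu> y = 1" using pt_sum[of b \<theta> 0] unfolding n0 \<mu>_def by simp
    moreover have "Dm (Suc l) = nodes_at (Suc l)"
      unfolding Dm_def anc_def using True y0 by (auto simp: nodes_at_iff)
    then have "S = 1" using S_eq pt_sum[of b \<theta> "Suc l"] unfolding \<mu>_def by simp
    ultimately show ?thesis by simp
  next
    case False
    define z where "z = (l, if snd y = 0 then 1 else 0::nat)"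
    have "(2::nat)^1 \<le> 2^l" using False by (intro power_increasing) simp_all
    then have "(1::nat) < 2^l" by simp
    then have z: "z \<in> nodes_at l" unfolding z_def by (simp add: nodes_at_iff)
    have zy: "z \<noteq> y" unfolding z_def by (cases y) auto
    have "sum \<mu> {y, z} \<le> 1" unfolding \<mu>_def using pt_sum_le1[of "{y,z}" l b \<theta>] y z by simp
    then have "\<mu> y + \<mu> z \<le> 1" using zy by simp
    moreover have "\<mu> z > 0" unfolding \<mu>_def using pt_pos[OF z] .
    ultimately have muy1': "\<mu> y < 1" by simp
    define w where "w = left_child z"
    have w: "w \<in> nodes_at (Suc l)" unfolding w_def using children_nodes[OF z] by simp
    have "anc l w = z" using children_iff[OF w z] unfolding w_def by simp
    then have wD: "w \<notin> Dm (Suc l)" using zy unfolding Dm_def by simp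
    have "sum \<mu> (insert w (Dm (Suc l))) \<le> 1" unfolding \<mu>_def
      using pt_sum_le1[of "insert w (Dm (Suc l))" "Suc l" b \<theta>] w Dm_sub by simp
    then have "\<mu> w + S \<le> 1" using wD S_eq finite_subset[OF Dm_sub finite_nodes_at] by simp
    moreover have "\<mu> w > 0" unfolding \<mu>_def using pt_pos[OF w] .
    ultimately have S1: "S < 1" by simp
    define X where "X = (1 - \<mu> y) / \<mu> y * (S / (1 - S))"
    have Xp: "X > 0" unfolding X_def using muy muy1' Sgt S1 by simp
    have tB: "t * B' / b l = ln X" unfolding t_def X_def using bl B'p by (simp add: field_simps)
    have "t * Bl / b l = t * B' / b l - t" unfolding B'e using bl by (simp add: field_simps)
    then have "t * Bl / b l = ln X - t" using tB by simp
    then have "E = exp (ln X - t)" unfolding E_def by simp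
    also have "\<dots> = X * exp (- t)" using Xp by (simp add: exp_diff exp_minus divide_inverse)
    finally have EX: "E = X * exp (- t)" .
    have "\<mu> y * X * (1 - S) = (1 - \<mu> y) * S" unfolding X_def using muy S1 by (simp add: field_simps)
    then have "(\<mu> y * X * (1 - S)) * exp (- t) = ((1 - \<mu> y) * S) * exp (- t)" by simp
    then show ?thesis unfolding EX by (simp only: mult.commute mult.left_commute mult.assoc)
  qed
  have KI2: "\<mu> y * E * Dn = S * exp (- t) * Dl"
  proof -
    have e1: "\<mu> y * E * Dn = \<mu> y * E * (1 - S) + (\<mu> y * E) * (S * exp (- t))"
      unfolding Dn_def by (simp add: algebra_simps)
    have e2: "S * exp (- t) * Dl = S * exp (- t) * (1 - \<mu> y) + (\<mu> y * E) * (S * exp (- t))"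
      unfolding Dl_def by (simp add: algebra_simps)
    show ?thesis unfolding e1 e2 KI ..
  qed
  have KI3: "(1 - \<mu> y) * Dn = (1 - S) * Dl"
  proof -
    have e1: "(1 - \<mu> y) * Dn = (1 - \<mu> y) * (1 - S) + S * exp (- t) * (1 - \<mu> y)"
      unfolding Dn_def by (simp add: algebra_simps)
    have e2: "(1 - S) * Dl = (1 - \<mu> y) * (1 - S) + \<mu> y * E * (1 - S)"
      unfolding Dl_def by (simp add: algebra_simps)
    show ?thesis unfolding e1 e2 KI ..
  qed
  have main: "coherent \<mu>' {k. l \<le> k \<and> k \<le> K}"
    unfolding coherent_def
  proof (intro ballI impI)
    fix k m z assume k: "k \<in> {k. l \<le> k \<and> k \<le> K}" and m: "m \<in> {k. l \<le> k \<and> k \<le> K}"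
      and km: "k < m" and z: "z \<in> nodes_at k"
    have lk: "l \<le> k" and kK: "k \<le> K" and mK: "m \<le> K" using k m by auto
    have lm: "l < m" using lk km by simp
    define Dz where "Dz = {u \<in> nodes_at m. anc k u = z}"
    have setEq: "{u \<in> nodes_at m. interv u \<subseteq> interv z} = Dz"
      using desc_set[OF z] km unfolding Dz_def by simp
    have uanc: "\<And>u. u \<in> Dz \<Longrightarrow> anc l u = anc l z"
      unfolding Dz_def using anc_anc[of _ m l k] lk km by auto
    define c where "c = (if anc l z = y then exp (- t) else 1)"
    have M1m: "\<And>u. u \<in> Dz \<Longrightarrow> \<mu>' u = \<mu> u * c / Dn"
    proof -
      fix u assume u: "u \<in> Dz"
      have "\<mu>' u * Dn = \<mu> u * c" unfolding c_def using M1[OF lm mK, of u] u uanc[OF u] unfolding Dz_def by simp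
      then show "\<mu>' u = \<mu> u * c / Dn" using Dnp by (simp add: field_simps)
    qed
    have sumDz: "sum \<mu>' Dz = sum \<mu> Dz * c / Dn"
      by (simp add: M1m sum_divide_distrib[symmetric] sum_distrib_right[symmetric])
    show "\<mu>' z = sum \<mu>' {u \<in> nodes_at m. interv u \<subseteq> interv z}"
      unfolding setEq sumDz
    proof (cases "k = l")
      case False
      then have lk': "l < k" using lk by simp
      have "\<mu> z = sum \<mu> Dz" unfolding Dz_def using cohm[OF lk' km mK z] .
      moreover have "\<mu>' z * Dn = \<mu> z * c" unfolding c_def using M1[OF lk' kK z] .
      ultimately show "\<mu>' z = sum \<mu> Dz * c / Dn" using Dnp by (simp add: field_simps)
    next
      case True
      have zl: "z \<in> nodes_at l" using z True by simp
      have az: "anc l z = z" using anc_self[OF zl] .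
      show "\<mu>' z = sum \<mu> Dz * c / Dn"
      proof (cases "z = y")
        case True
        have "Dz = Dm m" unfolding Dz_def Dm_def using \<open>k = l\<close> True by simp
        then have sD: "sum \<mu> Dz = S" using S_k[OF lm mK] by simp
        have c: "c = exp (- t)" unfolding c_def using az True by simp
        have "\<mu>' y * Dl = \<mu> y * E" using M0[OF y] by simp
        then have "\<mu>' y = \<mu> y * E / Dl" using Dlp by (simp add: field_simps)
        also have "\<dots> = S * exp (- t) / Dn" using KI2 Dlp Dnp by (simp add: field_simps)
        finally show ?thesis unfolding sD c True by (simp add: ac_simps)
      next
        case False
        have c: "c = 1" unfolding c_def using az False by simp
        have finDz: "finite Dz" unfolding Dz_def using finite_nodes_at by simp
        have a: "\<mu> z * (1 - \<mu>0 y) = \<mu>0 z * (1 - \<mu> y)"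
        proof -
          have "ptilde b \<theta> z * (1 - sum (ptilde b \<theta>0) {y}) = ptilde b \<theta>0 z * (1 - sum (ptilde b \<theta>) {y})"
            by (rule pt_off[where D="{y}" and k=l and \<theta>'=\<theta> and \<theta>=\<theta>0]) (use y zl False th_l in auto)
          then show ?thesis unfolding \<mu>_def \<mu>0_def by simp
        qed
        have s0: "sum \<mu>0 (Dm m) = \<mu>0 y" unfolding Dm_def using coh0m[of l m y] lm mK y by simp
        have bb: "\<And>u. u \<in> Dz \<Longrightarrow> \<mu> u * (1 - \<mu>0 y) = \<mu>0 u * (1 - S)"
        proof -
          fix u assume u: "u \<in> Dz"
          have un: "u \<in> nodes_at m - Dm m" using u uanc[OF u] az False unfolding Dz_def Dm_def by auto
          have "ptilde b \<theta> u * (1 - sum (ptilde b \<theta>0) (Dm m)) = ptilde b \<theta>0 u * (1 - sum (ptilde b \<theta>) (Dm m))"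
            by (rule pt_off[where D="Dm m" and k=m and \<theta>'=\<theta> and \<theta>=\<theta>0, OF Dm_sub _ un]) (use lm mK in \<open>auto intro: th_m[of m]\<close>)
          then show "\<mu> u * (1 - \<mu>0 y) = \<mu>0 u * (1 - S)"
            using s0 S_k[OF lm mK] unfolding \<mu>_def \<mu>0_def by simp
        qed
        have "sum \<mu> Dz * (1 - \<mu>0 y) = sum (\<lambda>u. \<mu> u * (1 - \<mu>0 y)) Dz" by (simp add: sum_distrib_right)
        also have "\<dots> = sum (\<lambda>u. \<mu>0 u * (1 - S)) Dz" by (rule sum.cong) (simp_all add: bb)
        also have "\<dots> = sum \<mu>0 Dz * (1 - S)" by (simp add: sum_distrib_right)
        also have "sum \<mu>0 Dz = \<mu>0 z" unfolding Dz_def using coh0m[of l m z] lm mK zl \<open>k = l\<close> by simp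
        finally have P: "sum \<mu> Dz * (1 - \<mu>0 y) = \<mu>0 z * (1 - S)" .
        have "sum \<mu>0 {y, z} \<le> 1" unfolding \<mu>0_def using pt_sum_le1[of "{y,z}" l b \<theta>0] y zl by simp
        then have "\<mu>0 y + \<mu>0 z \<le> 1" using False by simp
        moreover have "\<mu>0 z > 0" unfolding \<mu>0_def using pt_pos[OF zl] .
        ultimately have q: "1 - \<mu>0 y > 0" by simp
        have "(\<mu> z * Dn) * (1 - \<mu>0 y) = \<mu>0 z * ((1 - \<mu> y) * Dn)" using a by (simp add: ac_simps)
        also have "\<dots> = \<mu>0 z * ((1 - S) * Dl)" unfolding KI3 ..
        also have "\<dots> = (sum \<mu> Dz * Dl) * (1 - \<mu>0 y)" using P by (simp add: ac_simps)
        finally have prodeq: "\<mu> z * Dn = sum \<mu> Dz * Dl" using q by simp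
        have "\<mu>' z * Dl = \<mu> z" using M0[OF zl] False by simp
        then have e1: "\<mu>' z = \<mu> z / Dl" using Dlp by (simp add: field_simps)
        have e2: "\<mu> z / Dl = sum \<mu> Dz / Dn" using prodeq Dnp Dlp by (simp add: frac_eq_eq)
        show ?thesis unfolding c e1 e2 by simp
      qed
    qed
  qed
  show ?thesis using main unfolding Let_def \<mu>'_def \<theta>'_def t_eq[symmetric] \<mu>_def \<theta>_def .
qed

end
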